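(* Let $F,G$ be complete Heyting sheaves (frame sheaves) on a locale $X$ and $\alpha:F\to G$ an order-preserving morphism. Then $\alpha$ is a frame morphism if and only if for each $u\in\mathcal{O}(X)$, $\alpha_u:F(u)\to G(u)$ is a frame homomorphism and for all $v\le u$ in $\mathcal{O}(X)$, $\alpha_u\circ f_{v,u}=g_{v,u}\circ\alpha_v$, where $f_{v,u}:F(v)\to F(u)$ and $g_{v,u}:G(v)\to G(u)$ are the left adjoints of the restriction maps $F(u)\to F(v)$ and $G(u)\to G(v)$.
   Context: Let $X$ be a locale with frame of opens $\mathcal{O}(X)$. A posheaf on $X$ is a sheaf of sets $F$ with (POS1) each $F(u)$ a poset; (POS2) restriction maps $F(u)\to F(v)$, $x\mapsto x|_v$ ($v\le u$), order-preserving; (POS3) if $u=\bigvee_i u_i$ and $s,t\in F(u)$ satisfy $s|_{u_i}\le t|_{u_i}$ for all $i$, then $s\le t$. A frame sheaf (complete Heyting sheaf) is a posheaf $F$ such that each $F(u)$ is a frame, each restriction map $F(u)\to F(v)$ ($v\le u$) is surjective and has a left adjoint $l_{v,u}$ and a right adjoint, and $x\wedge l_{v,u}(y)=l_{v,u}(x|_v\wedge y)$ for $x\in F(u)$, $y\in F(v)$. A morphism $\alpha$ of posheaves is order-preserving if each $\alpha_u$ is monotone. For complete posheaves, $sup_F:\mathbb{P}F\to F$ sends a subsheaf $S$ of $F^u$ (the restriction of $F$ to $\downarrow u$) to the least $z\in F(u)$ with $S(v)\subseteq\{y\mid y\le z|_v\}$ for all $v\le u$; $\alpha_*$ sends $S$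 to the subsheaf of $G^u$ generated by $v\mapsto\alpha_v(S(v))$; $\alpha$ is sup-preserving if $sup_G\circ\alpha_*=\alpha\circ sup_F$. $\alpha$ preserves finite meets if $m_G\circ(\alpha\times\alpha)=\alpha\circ m_F$, where $m_F$ is componentwise binary meet. A frame morphism is a sup-preserving morphism that preserves finite meets. *)

theory Defs
  imports Main
begin

section \<open>Locales: the frame of opens is a type of class complete_lattice satisfying the frame law\<close>

definition frame_type :: "'o::complete_lattice itself \<Rightarrow> bool" where
  "frame_type _ \<longleftrightarrow> (\<forall>(x::'o) A. inf x (Sup A) = Sup (inf x ` A))"

definition partial_order_on_set :: "'a set \<Rightarrow> ('a \<Rightarrow> 'a \<Rightarrow> bool) \<Rightarrow> bool" where
  "partial_order_on_set A le \<longleftrightarrow>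
     (\<forall>x\<in>A. le x x) \<and>
     (\<forall>x\<in>A. \<forall>y\<in>A. le x y \<and> le y x \<longrightarrow> x = y) \<and>
     (\<forall>x\<in>A. \<forall>y\<in>A. \<forall>z\<in>A. le x y \<and> le y z \<longrightarrow> le x z)"

definition is_lub :: "'a set \<Rightarrow> ('a \<Rightarrow> 'a \<Rightarrow> bool) \<Rightarrow> 'a set \<Rightarrow> 'a \<Rightarrow> bool" where
  "is_lub A le B z \<longleftrightarrow> z \<in> A \<and> (\<forall>b\<in>B. le b z) \<and> (\<forall>z'\<in>A. (\<forall>b\<in>B. le b z') \<longrightarrow> le z z')"

definition is_glb :: "'a set \<Rightarrow> ('a \<Rightarrow> 'a \<Rightarrow> bool) \<Rightarrow> 'a set \<Rightarrow> 'a \<Rightarrow> bool" where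
  "is_glb A le B z \<longleftrightarrow> z \<in> A \<and> (\<forall>b\<in>B. le z b) \<and> (\<forall>z'\<in>A. (\<forall>b\<in>B. le z' b) \<longrightarrow> le z' z)"

definition lub_on :: "'a set \<Rightarrow> ('a \<Rightarrow> 'a \<Rightarrow> bool) \<Rightarrow> 'a set \<Rightarrow> 'a" where
  "lub_on A le B = (THE z. is_lub A le B z)"

definition meet_on :: "'a set \<Rightarrow> ('a \<Rightarrow> 'a \<Rightarrow> bool) \<Rightarrow> 'a \<Rightarrow> 'a \<Rightarrow> 'a" where
  "meet_on A le x y = (THE z. is_glb A le {x, y} z)"

definition top_on :: "'a set \<Rightarrow> ('a \<Rightarrow> 'a \<Rightarrow> bool) \<Rightarrow> 'a" where
  "top_on A le = lub_on A le A"

definition frame_on :: "'a set \<Rightarrow> ('a \<Rightarrow> 'a \<Rightarrow> bool) \<Rightarrow> bool" where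
  "frame_on A le \<longleftrightarrow> partial_order_on_set A le \<and>
     (\<forall>B\<subseteq>A. \<exists>z. is_lub A le B z) \<and>
     (\<forall>x\<in>A. \<forall>B\<subseteq>A. meet_on A le x (lub_on A le B) = lub_on A le ((\<lambda>b. meet_on A le x b) ` B))"

definition frame_hom :: "'a set \<Rightarrow> ('a \<Rightarrow> 'a \<Rightarrow> bool) \<Rightarrow> 'b set \<Rightarrow> ('b \<Rightarrow> 'b \<Rightarrow> bool) \<Rightarrow> ('a \<Rightarrow> 'b) \<Rightarrow> bool" where
  "frame_hom A leA B leB f \<longleftrightarrow>
     (\<forall>x\<in>A. f x \<in> B) \<and>
     (\<forall>C\<subseteq>A. f (lub_on A leA C) = lub_on B leB (f ` C)) \<and>
     (\<forall>x\<in>A. \<forall>y\<in>A. f (meet_on A leA x y) = meet_on B leB (f x) (f y)) \<and>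
     f (top_on A leA) = top_on B leB"

text \<open>sec F u = F(u); res F u v x = x|_v for v \<le> u; le F u = order of F(u).\<close>
record ('o, 'a) posheaf =
  sec :: "'o \<Rightarrow> 'a set"
  res :: "'o \<Rightarrow> 'o \<Rightarrow> 'a \<Rightarrow> 'a"
  le  :: "'o \<Rightarrow> 'a \<Rightarrow> 'a \<Rightarrow> bool"

definition sheaf :: "('o::complete_lattice, 'a) posheaf \<Rightarrow> bool" where
  "sheaf F \<longleftrightarrow>
     (\<forall>u. \<forall>x\<in>sec F u. res F u u x = x) \<and>
     (\<forall>u v. v \<le> u \<longrightarrow> (\<forall>x\<in>sec F u. res F u v x \<in> sec F v)) \<and>
     (\<forall>u v w. w \<le> v \<longrightarrow> v \<le> u \<longrightarrow> (\<forall>x\<in>sec F u. res F v w (res F u v x) = res F u w x)) \<and>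
     (\<forall>u U s. Sup U = u \<longrightarrow> (\<forall>w\<in>U. s w \<in> sec F w) \<longrightarrow>
        (\<forall>w\<in>U. \<forall>w'\<in>U. res F w (inf w w') (s w) = res F w' (inf w w') (s w')) \<longrightarrow>
        (\<exists>!x. x \<in> sec F u \<and> (\<forall>w\<in>U. res F u w x = s w)))"

definition is_posheaf :: "('o::complete_lattice, 'a) posheaf \<Rightarrow> bool" where
  "is_posheaf F \<longleftrightarrow> sheaf F \<and>
     (\<forall>u. partial_order_on_set (sec F u) (le F u)) \<and>
     (\<forall>u v. v \<le> u \<longrightarrow> (\<forall>x\<in>sec F u. \<forall>y\<in>sec F u. le F u x y \<longrightarrow> le F v (res F u v x) (res F u v y))) \<and>
     (\<forall>u U. Sup U = u \<longrightarrow> (\<forall>s\<in>sec F u. \<forall>t\<in>sec F u.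
        (\<forall>w\<in>U. le F w (res F u w s) (res F u w t)) \<longrightarrow> le F u s t))"

definition ladj :: "('o::complete_lattice, 'a) posheaf \<Rightarrow> 'o \<Rightarrow> 'o \<Rightarrow> 'a \<Rightarrow> 'a" where
  "ladj F u v y = (THE x. x \<in> sec F u \<and> (\<forall>x'\<in>sec F u. le F u x x' \<longleftrightarrow> le F v y (res F u v x')))"

definition frame_sheaf :: "('o::complete_lattice, 'a) posheaf \<Rightarrow> bool" where
  "frame_sheaf F \<longleftrightarrow> is_posheaf F \<and>
     (\<forall>u. frame_on (sec F u) (le F u)) \<and>
     (\<forall>u v. v \<le> u \<longrightarrow> res F u v ` sec F u = sec F v) \<and>
     (\<forall>u v. v \<le> u \<longrightarrow> (\<exists>l. \<forall>y\<in>sec F v. l y \<in> sec F u \<and>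
          (\<forall>x\<in>sec F u. le F u (l y) x \<longleftrightarrow> le F v y (res F u v x)))) \<and>
     (\<forall>u v. v \<le> u \<longrightarrow> (\<exists>r. \<forall>y\<in>sec F v. r y \<in> sec F u \<and>
          (\<forall>x\<in>sec F u. le F v (res F u v x) y \<longleftrightarrow> le F u x (r y)))) \<and>
     (\<forall>u v. v \<le> u \<longrightarrow> (\<forall>x\<in>sec F u. \<forall>y\<in>sec F v.
          meet_on (sec F u) (le F u) x (ladj F u v y) =
          ladj F u v (meet_on (sec F v) (le F v) (res F u v x) y)))"

definition sheaf_morphism :: "('o::complete_lattice, 'a) posheaf \<Rightarrow> ('o, 'b) posheaf \<Rightarrow> ('o \<Rightarrow> 'a \<Rightarrow> 'b) \<Rightarrow> bool" where
  "sheaf_morphism F G \<alpha> \<longleftrightarrow>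
     (\<forall>u. \<forall>x\<in>sec F u. \<alpha> u x \<in> sec G u) \<and>
     (\<forall>u v. v \<le> u \<longrightarrow> (\<forall>x\<in>sec F u. \<alpha> v (res F u v x) = res G u v (\<alpha> u x)))"

definition order_preserving :: "('o::complete_lattice, 'a) posheaf \<Rightarrow> ('o, 'b) posheaf \<Rightarrow> ('o \<Rightarrow> 'a \<Rightarrow> 'b) \<Rightarrow> bool" where
  "order_preserving F G \<alpha> \<longleftrightarrow>
     (\<forall>u. \<forall>x\<in>sec F u. \<forall>y\<in>sec F u. le F u x y \<longrightarrow> le G u (\<alpha> u x) (\<alpha> u y))"

text \<open>Subsheaves of F^u (the elements of (\<bbbP>F)(u)); S v is empty for v not below u.\<close>
definition subsheaf :: "('o::complete_lattice, 'a) posheaf \<Rightarrow> 'o \<Rightarrow> ('o \<Rightarrow> 'a set) \<Rightarrow> bool" where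
  "subsheaf F u S \<longleftrightarrow>
     (\<forall>v. \<not> v \<le> u \<longrightarrow> S v = {}) \<and>
     (\<forall>v. v \<le> u \<longrightarrow> S v \<subseteq> sec F v) \<and>
     (\<forall>v w. w \<le> v \<longrightarrow> v \<le> u \<longrightarrow> (\<forall>x\<in>S v. res F v w x \<in> S w)) \<and>
     (\<forall>v U s. v \<le> u \<longrightarrow> Sup U = v \<longrightarrow> (\<forall>w\<in>U. s w \<in> S w) \<longrightarrow>
        (\<forall>w\<in>U. \<forall>w'\<in>U. res F w (inf w w') (s w) = res F w' (inf w w') (s w')) \<longrightarrow>
        (\<exists>x\<in>S v. \<forall>w\<in>U. res F v w x = s w))"

definition sup_sh :: "('o::complete_lattice, 'a) posheaf \<Rightarrow> 'o \<Rightarrow> ('o \<Rightarrow> 'a set) \<Rightarrow> 'a" where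
  "sup_sh F u S = (THE z. z \<in> sec F u \<and>
      (\<forall>v. v \<le> u \<longrightarrow> (\<forall>y\<in>S v. le F v y (res F u v z))) \<and>
      (\<forall>z'\<in>sec F u. (\<forall>v. v \<le> u \<longrightarrow> (\<forall>y\<in>S v. le F v y (res F u v z'))) \<longrightarrow> le F u z z'))"

text \<open>\<alpha>_* : the subsheaf of G^u generated by v \<mapsto> \<alpha>_v(S(v)).\<close>
definition push :: "('o \<Rightarrow> 'a \<Rightarrow> 'b) \<Rightarrow> ('o::complete_lattice, 'b) posheaf \<Rightarrow> 'o \<Rightarrow> ('o \<Rightarrow> 'a set) \<Rightarrow> ('o \<Rightarrow> 'b set)" where
  "push \<alpha> G u S = (\<lambda>v. {y. \<forall>S'. subsheaf G u S' \<and> (\<forall>w. w \<le> u \<longrightarrow> \<alpha> w ` S w \<subseteq> S' w) \<longrightarrow> y \<in> S' v})"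

definition sup_preserving :: "('o::complete_lattice, 'a) posheaf \<Rightarrow> ('o, 'b) posheaf \<Rightarrow> ('o \<Rightarrow> 'a \<Rightarrow> 'b) \<Rightarrow> bool" where
  "sup_preserving F G \<alpha> \<longleftrightarrow>
     (\<forall>u S. subsheaf F u S \<longrightarrow> sup_sh G u (push \<alpha> G u S) = \<alpha> u (sup_sh F u S))"

definition preserves_finite_meets :: "('o::complete_lattice, 'a) posheaf \<Rightarrow> ('o, 'b) posheaf \<Rightarrow> ('o \<Rightarrow> 'a \<Rightarrow> 'b) \<Rightarrow> bool" where
  "preserves_finite_meets F G \<alpha> \<longleftrightarrow>
     (\<forall>u. \<forall>x\<in>sec F u. \<forall>y\<in>sec F u.
        \<alpha> u (meet_on (sec F u) (le F u) x y) = meet_on (sec G u) (le G u) (\<alpha> u x) (\<alpha> u y)) \<and>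
     (\<forall>u. \<alpha> u (top_on (sec F u) (le F u)) = top_on (sec G u) (le G u))"

definition frame_morphism :: "('o::complete_lattice, 'a) posheaf \<Rightarrow> ('o, 'b) posheaf \<Rightarrow> ('o \<Rightarrow> 'a \<Rightarrow> 'b) \<Rightarrow> bool" where
  "frame_morphism F G \<alpha> \<longleftrightarrow> sup_preserving F G \<alpha> \<and> preserves_finite_meets F G \<alpha>"

end

theory Submission
  imports Defs
begin

definition ubs :: "('o::complete_lattice,'a) posheaf \<Rightarrow> 'o \<Rightarrow> ('o \<Rightarrow> 'a set) \<Rightarrow> 'a \<Rightarrow> bool" where
  "ubs G u T z \<longleftrightarrow> (\<forall>v. v \<le> u \<longrightarrow> (\<forall>y\<in>T v. le G v y (res G u v z)))"

lemma sup_sh_alt: "sup_sh G u T = (THE z. z \<in> sec G u \<and> ubs G u T z \<and> (\<forall>z'\<in>sec G u. ubs G u T z' \<longrightarrow> le G u z z'))"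
  by (simp add: sup_sh_def ubs_def)

lemma sup_sh_cong:
  assumes "\<And>z. z \<in> sec G u \<Longrightarrow> ubs G u T z = ubs G u T' z"
  shows "sup_sh G u T = sup_sh G u T'"
  unfolding sup_sh_alt
  apply (rule arg_cong[where f=The])
  using assms by (auto intro!: ext)

lemma sup_sh_eq:
  assumes po: "partial_order_on_set (sec G u) (le G u)"
    and z: "z \<in> sec G u" "ubs G u T z" "\<forall>z'\<in>sec G u. ubs G u T z' \<longrightarrow> le G u z z'"
  shows "sup_sh G u T = z"
  unfolding sup_sh_alt
proof (rule the_equality)
  show "z \<in> sec G u \<and> ubs G u T z \<and> (\<forall>z'\<in>sec G u. ubs G u T z' \<longrightarrow> le G u z z')" using z by blast
next
  fix x assume "x \<in> sec G u \<and> ubs G u T x \<and> (\<forall>z'\<in>sec G u. ubs G u T z' \<longrightarrow> le G u x z')"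
  then have "le G u x z" "le G u z x" "x \<in> sec G u" using z by blast+
  then show "x = z" using z(1) po unfolding partial_order_on_set_def by blast
qed

lemma lub_eq:
  assumes po: "partial_order_on_set A r" and "is_lub A r B z"
  shows "lub_on A r B = z"
  unfolding lub_on_def
proof (rule the_equality)
  show "is_lub A r B z" by fact
next
  fix x assume x: "is_lub A r B x"
  then have "r x z" "r z x" "x \<in> A" "z \<in> A" using assms(2) unfolding is_lub_def by blast+
  then show "x = z" using po unfolding partial_order_on_set_def by blast
qed

lemma posheaf_facts:
  assumes "is_posheaf G"
  shows po: "partial_order_on_set (sec G u) (le G u)"
    and res_id: "x \<in> sec G u \<Longrightarrow> res G u u x = x"
    and res_sec: "v \<le> u \<Longrightarrow> x \<in> sec G u \<Longrightarrow> res G u v x \<in> sec G v"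
    and res_comp: "w \<le> v \<Longrightarrow> v \<le> u \<Longrightarrow> x \<in> sec G u \<Longrightarrow> res G v w (res G u v x) = res G u w x"
    and glue: "Sup U = v \<Longrightarrow> (\<forall>w\<in>U. s w \<in> sec G w) \<Longrightarrow>
        (\<forall>w\<in>U. \<forall>w'\<in>U. res G w (inf w w') (s w) = res G w' (inf w w') (s w')) \<Longrightarrow>
        (\<exists>!x. x \<in> sec G v \<and> (\<forall>w\<in>U. res G v w x = s w))"
    and mono: "v \<le> u \<Longrightarrow> x \<in> sec G u \<Longrightarrow> y \<in> sec G u \<Longrightarrow> le G u x y \<Longrightarrow> le G v (res G u v x) (res G u v y)"
    and pos3: "Sup U = u \<Longrightarrow> a \<in> sec G u \<Longrightarrow> b \<in> sec G u \<Longrightarrow>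
        (\<forall>w\<in>U. le G w (res G u w a) (res G u w b)) \<Longrightarrow> le G u a b"
proof -
  have H: "sheaf G \<and> (\<forall>u. partial_order_on_set (sec G u) (le G u)) \<and>
     (\<forall>u v. v \<le> u \<longrightarrow> (\<forall>x\<in>sec G u. \<forall>y\<in>sec G u. le G u x y \<longrightarrow> le G v (res G u v x) (res G u v y))) \<and>
     (\<forall>u U. Sup U = u \<longrightarrow> (\<forall>s\<in>sec G u. \<forall>t\<in>sec G u.
        (\<forall>w\<in>U. le G w (res G u w s) (res G u w t)) \<longrightarrow> le G u s t))"
    using assms unfolding is_posheaf_def .
  note S = conjunct1[OF H] and P = conjunct1[OF conjunct2[OF H]]
   and M = conjunct1[OF conjunct2[OF conjunct2[OF H]]] and Q = conjunct2[OF conjunct2[OF conjunct2[OF H]]]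
  have H2: "(\<forall>u. \<forall>x\<in>sec G u. res G u u x = x) \<and>
     (\<forall>u v. v \<le> u \<longrightarrow> (\<forall>x\<in>sec G u. res G u v x \<in> sec G v)) \<and>
     (\<forall>u v w. w \<le> v \<longrightarrow> v \<le> u \<longrightarrow> (\<forall>x\<in>sec G u. res G v w (res G u v x) = res G u w x)) \<and>
     (\<forall>u U s. Sup U = u \<longrightarrow> (\<forall>w\<in>U. s w \<in> sec G w) \<longrightarrow>
        (\<forall>w\<in>U. \<forall>w'\<in>U. res G w (inf w w') (s w) = res G w' (inf w w') (s w')) \<longrightarrow>
        (\<exists>!x. x \<in> sec G u \<and> (\<forall>w\<in>U. res G u w x = s w)))"
    using S unfolding sheaf_def .
  note S1 = conjunct1[OF H2] and S2 = conjunct1[OF conjunct2[OF H2]]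
   and S3 = conjunct1[OF conjunct2[OF conjunct2[OF H2]]] and S4 = conjunct2[OF conjunct2[OF conjunct2[OF H2]]]
  show "partial_order_on_set (sec G u) (le G u)" using P by (rule spec)
  show "x \<in> sec G u \<Longrightarrow> res G u u x = x" using S1 by simp
  show "v \<le> u \<Longrightarrow> x \<in> sec G u \<Longrightarrow> res G u v x \<in> sec G v" using S2 by simp
  show "w \<le> v \<Longrightarrow> v \<le> u \<Longrightarrow> x \<in> sec G u \<Longrightarrow> res G v w (res G u v x) = res G u w x" using S3 by simp
  show "Sup U = v \<Longrightarrow> (\<forall>w\<in>U. s w \<in> sec G w) \<Longrightarrow>
        (\<forall>w\<in>U. \<forall>w'\<in>U. res G w (inf w w') (s w) = res G w' (inf w w') (s w')) \<Longrightarrow>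
        (\<exists>!x. x \<in> sec G v \<and> (\<forall>w\<in>U. res G v w x = s w))"
    by (rule S4[rule_format]; blast)
  show "v \<le> u \<Longrightarrow> x \<in> sec G u \<Longrightarrow> y \<in> sec G u \<Longrightarrow> le G u x y \<Longrightarrow> le G v (res G u v x) (res G u v y)"
    by (rule M[rule_format]; blast)
  show "Sup U = u \<Longrightarrow> a \<in> sec G u \<Longrightarrow> b \<in> sec G u \<Longrightarrow>
        (\<forall>w\<in>U. le G w (res G u w a) (res G u w b)) \<Longrightarrow> le G u a b"
    using Q by blast
qed

lemma push_subsheaf:
  assumes G: "is_posheaf G" and T: "\<forall>w. w \<le> u \<longrightarrow> \<beta> w ` T w \<subseteq> sec G w"
  shows "subsheaf G u (push \<beta> G u T)"
proof -
  define Full where "Full = (\<lambda>w. if w \<le> u then sec G w else {})"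
  have fullsub: "subsheaf G u Full"
    unfolding subsheaf_def Full_def
  proof (intro conjI allI impI ballI)
    fix v U s assume vu: "v \<le> u" and U: "Sup U = v" and s: "\<forall>w\<in>U. s w \<in> (if w \<le> u then sec G w else {})"
      and c: "\<forall>w\<in>U. \<forall>w'\<in>U. res G w (inf w w') (s w) = res G w' (inf w w') (s w')"
    have "\<forall>w\<in>U. s w \<in> sec G w" using s by (auto split: if_splits)
    from glue[OF G U this c] obtain x where "x \<in> sec G v" "\<forall>w\<in>U. res G v w x = s w" by blast
    then show "\<exists>x\<in>(if v \<le> u then sec G v else {}). \<forall>w\<in>U. res G v w x = s w" using vu by auto
  qed (auto intro: res_sec[OF G] order_trans)
  have fullin: "\<forall>w. w \<le> u \<longrightarrow> \<beta> w ` T w \<subseteq> Full w" using T by (simp add: Full_def)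
  have P: "\<And>y v. y \<in> push \<beta> G u T v \<Longrightarrow> y \<in> Full v"
    using fullsub fullin unfolding push_def by blast
  show ?thesis
    unfolding subsheaf_def
  proof (intro conjI allI impI ballI)
    fix v assume "\<not> v \<le> u" then show "push \<beta> G u T v = {}" using P[of _ v] by (auto simp: Full_def)
  next
    fix v assume "v \<le> u" then show "push \<beta> G u T v \<subseteq> sec G v" using P by (force simp: Full_def)
  next
    fix v w x assume "w \<le> v" "v \<le> u" "x \<in> push \<beta> G u T v"
    then show "res G v w x \<in> push \<beta> G u T w"
      unfolding push_def subsheaf_def by blast
  next
    fix v U s assume vu: "v \<le> u" and U: "Sup U = v" and s: "\<forall>w\<in>U. s w \<in> push \<beta> G u T w"
      and c: "\<forall>w\<in>U. \<forall>w'\<in>U. res G w (inf w w') (s w) = res G w' (inf w w') (s w')"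
    have wu: "\<forall>w\<in>U. w \<le> u" using U vu by (auto intro: Sup_upper order_trans)
    have "\<forall>w\<in>U. s w \<in> sec G w" using s P wu by (force simp: Full_def)
    from glue[OF G U this c] obtain x where x: "x \<in> sec G v" "\<forall>w\<in>U. res G v w x = s w"
      and uq: "\<And>x'. x' \<in> sec G v \<Longrightarrow> \<forall>w\<in>U. res G v w x' = s w \<Longrightarrow> x' = x" by metis
    have "x \<in> push \<beta> G u T v"
      unfolding push_def
    proof (intro CollectI allI impI)
      fix S' assume S': "subsheaf G u S' \<and> (\<forall>w. w \<le> u \<longrightarrow> \<beta> w ` T w \<subseteq> S' w)"
      have "\<forall>w\<in>U. s w \<in> S' w" using s S' unfolding push_def by blast
      moreover have "\<forall>v U s. v \<le> u \<longrightarrow> Sup U = v \<longrightarrow> (\<forall>w\<in>U. s w \<in> S' w) \<longrightarrow>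
        (\<forall>w\<in>U. \<forall>w'\<in>U. res G w (inf w w') (s w) = res G w' (inf w w') (s w')) \<longrightarrow>
        (\<exists>x\<in>S' v. \<forall>w\<in>U. res G v w x = s w)" using S' unfolding subsheaf_def by blast
      ultimately obtain x' where "x' \<in> S' v" "\<forall>w\<in>U. res G v w x' = s w"
        using vu U c by blast
      moreover have "x' \<in> sec G v" using S' \<open>x' \<in> S' v\<close> vu unfolding subsheaf_def by blast
      ultimately show "x \<in> S' v" using uq by metis
    qed
    then show "\<exists>x\<in>push \<beta> G u T v. \<forall>w\<in>U. res G v w x = s w" using x by blast
  qed
qed

lemma ubs_push:
  assumes G: "is_posheaf G" and T: "\<forall>w. w \<le> u \<longrightarrow> \<beta> w ` T w \<subseteq> sec G w" and z: "z \<in> sec G u"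
  shows "ubs G u (push \<beta> G u T) z = ubs G u (\<lambda>v. \<beta> v ` T v) z"
proof
  assume "ubs G u (push \<beta> G u T) z"
  moreover have "\<And>v. v \<le> u \<Longrightarrow> \<beta> v ` T v \<subseteq> push \<beta> G u T v" unfolding push_def by blast
  ultimately show "ubs G u (\<lambda>v. \<beta> v ` T v) z" unfolding ubs_def by blast
next
  assume ub: "ubs G u (\<lambda>v. \<beta> v ` T v) z"
  define S' where "S' = (\<lambda>w. if w \<le> u then {y \<in> sec G w. le G w y (res G u w z)} else {})"
  have "subsheaf G u S'"
    unfolding subsheaf_def S'_def
  proof (intro conjI allI impI ballI)
    fix v w x assume wv: "w \<le> v" and vu: "v \<le> u" and x: "x \<in> (if v \<le> u then {y \<in> sec G v. le G v y (res G u v z)} else {})"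
    have wu: "w \<le> u" using wv vu by simp
    have xs: "x \<in> sec G v" "le G v x (res G u v z)" using x vu by auto
    have "le G w (res G v w x) (res G v w (res G u v z))"
      by (rule mono[OF G wv xs(1) res_sec[OF G vu z] xs(2)])
    then show "res G v w x \<in> (if w \<le> u then {y \<in> sec G w. le G w y (res G u w z)} else {})"
      using wu res_comp[OF G wv vu z] res_sec[OF G wv xs(1)] by simp
  next
    fix v U s assume vu: "v \<le> u" and U: "Sup U = v"
      and s: "\<forall>w\<in>U. s w \<in> (if w \<le> u then {y \<in> sec G w. le G w y (res G u w z)} else {})"
      and c: "\<forall>w\<in>U. \<forall>w'\<in>U. res G w (inf w w') (s w) = res G w' (inf w w') (s w')"
    have wv: "\<forall>w\<in>U. w \<le> v" using U by (auto intro: Sup_upper)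
    have "\<forall>w\<in>U. s w \<in> sec G w" using s by (auto split: if_splits)
    from glue[OF G U this c] obtain x where x: "x \<in> sec G v" "\<forall>w\<in>U. res G v w x = s w" by blast
    have zv: "res G u v z \<in> sec G v" using res_sec[OF G vu z] .
    have "le G v x (res G u v z)"
    proof (rule pos3[OF G U x(1) zv], intro ballI)
      fix w assume w: "w \<in> U"
      then have "w \<le> u" using wv vu by (meson order_trans)
      then show "le G w (res G v w x) (res G v w (res G u v z))"
        using s w x res_comp[OF G _ vu z, of w] wv by auto
    qed
    then show "\<exists>x\<in>(if v \<le> u then {y \<in> sec G v. le G v y (res G u v z)} else {}). \<forall>w\<in>U. res G v w x = s w"
      using x vu by auto
  qed auto
  moreover have "\<forall>w. w \<le> u \<longrightarrow> \<beta> w ` T w \<subseteq> S' w" using ub T unfolding ubs_def S'_def by fastforce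
  ultimately have "\<And>v y. y \<in> push \<beta> G u T v \<Longrightarrow> y \<in> S' v" unfolding push_def by blast
  then have "\<And>v y. v \<le> u \<Longrightarrow> y \<in> push \<beta> G u T v \<Longrightarrow> le G v y (res G u v z)"
    unfolding S'_def by (metis (no_types, lifting) mem_Collect_eq)
  then show "ubs G u (push \<beta> G u T) z" unfolding ubs_def by blast
qed

lemma ubs_gen:
  assumes F: "is_posheaf F" and G: "is_posheaf G" and m: "sheaf_morphism F G \<alpha>"
    and T: "\<forall>w. w \<le> u \<longrightarrow> T w \<subseteq> sec F w" and z: "z \<in> sec G u"
  shows "ubs G u (\<lambda>v. \<alpha> v ` push (\<lambda>w x. x) F u T v) z = ubs G u (\<lambda>v. \<alpha> v ` T v) z"
proof
  assume "ubs G u (\<lambda>v. \<alpha> v ` push (\<lambda>w x. x) F u T v) z"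
  moreover have "\<And>v. v \<le> u \<Longrightarrow> T v \<subseteq> push (\<lambda>w x. x) F u T v" unfolding push_def by auto
  ultimately show "ubs G u (\<lambda>v. \<alpha> v ` T v) z" unfolding ubs_def by blast
next
  assume ub: "ubs G u (\<lambda>v. \<alpha> v ` T v) z"
  have asec: "\<And>w x. x \<in> sec F w \<Longrightarrow> \<alpha> w x \<in> sec G w" using m unfolding sheaf_morphism_def by blast
  have ares: "\<And>u v x. v \<le> u \<Longrightarrow> x \<in> sec F u \<Longrightarrow> \<alpha> v (res F u v x) = res G u v (\<alpha> u x)"
    using m unfolding sheaf_morphism_def by blast
  define S' where "S' = (\<lambda>w. if w \<le> u then {y \<in> sec F w. le G w (\<alpha> w y) (res G u w z)} else {})"
  have "subsheaf F u S'"
    unfolding subsheaf_def S'_def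
  proof (intro conjI allI impI ballI)
    fix v w x assume wv: "w \<le> v" and vu: "v \<le> u" and x: "x \<in> (if v \<le> u then {y \<in> sec F v. le G v (\<alpha> v y) (res G u v z)} else {})"
    have wu: "w \<le> u" using wv vu by simp
    have xs: "x \<in> sec F v" "le G v (\<alpha> v x) (res G u v z)" using x vu by auto
    have "le G w (res G v w (\<alpha> v x)) (res G v w (res G u v z))"
      by (rule mono[OF G wv asec[OF xs(1)] res_sec[OF G vu z] xs(2)])
    then show "res F v w x \<in> (if w \<le> u then {y \<in> sec F w. le G w (\<alpha> w y) (res G u w z)} else {})"
      using wu res_comp[OF G wv vu z] ares[OF wv xs(1)] res_sec[OF F wv xs(1)] by simp
  next
    fix v U s assume vu: "v \<le> u" and U: "Sup U = v"
      and s: "\<forall>w\<in>U. s w \<in> (if w \<le> u then {y \<in> sec F w. le G w (\<alpha> w y) (res G u w z)} else {})"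
      and c: "\<forall>w\<in>U. \<forall>w'\<in>U. res F w (inf w w') (s w) = res F w' (inf w w') (s w')"
    have wv: "\<forall>w\<in>U. w \<le> v" using U by (auto intro: Sup_upper)
    have "\<forall>w\<in>U. s w \<in> sec F w" using s by (auto split: if_splits)
    from glue[OF F U this c] obtain x where x: "x \<in> sec F v" "\<forall>w\<in>U. res F v w x = s w" by blast
    have zv: "res G u v z \<in> sec G v" using res_sec[OF G vu z] .
    have "le G v (\<alpha> v x) (res G u v z)"
    proof (rule pos3[OF G U asec[OF x(1)] zv], intro ballI)
      fix w assume w: "w \<in> U"
      then have "w \<le> u" using wv vu by (meson order_trans)
      then show "le G w (res G v w (\<alpha> v x)) (res G v w (res G u v z))"
        using s w x res_comp[OF G _ vu z, of w] wv ares[of w v x] by auto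
    qed
    then show "\<exists>x\<in>(if v \<le> u then {y \<in> sec F v. le G v (\<alpha> v y) (res G u v z)} else {}). \<forall>w\<in>U. res F v w x = s w"
      using x vu by auto
  qed auto
  moreover have "\<forall>w. w \<le> u \<longrightarrow> (\<lambda>x. x) ` T w \<subseteq> S' w" using ub T unfolding ubs_def S'_def by auto
  ultimately have "\<And>v y. y \<in> push (\<lambda>w x. x) F u T v \<Longrightarrow> y \<in> S' v" unfolding push_def by blast
  then have "\<And>v y. v \<le> u \<Longrightarrow> y \<in> push (\<lambda>w x. x) F u T v \<Longrightarrow> le G v (\<alpha> v y) (res G u v z)"
    unfolding S'_def by (metis (no_types, lifting) mem_Collect_eq)
  then show "ubs G u (\<lambda>v. \<alpha> v ` push (\<lambda>w x. x) F u T v) z" unfolding ubs_def by blast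
qed

lemma ladj_prop:
  assumes F: "frame_sheaf F" and vu: "v \<le> u" and y: "y \<in> sec F v"
  shows "ladj F u v y \<in> sec F u \<and> (\<forall>x'\<in>sec F u. le F u (ladj F u v y) x' \<longleftrightarrow> le F v y (res F u v x'))"
proof -
  have P: "is_posheaf F" using F unfolding frame_sheaf_def by blast
  obtain l where l: "\<forall>y\<in>sec F v. l y \<in> sec F u \<and> (\<forall>x\<in>sec F u. le F u (l y) x \<longleftrightarrow> le F v y (res F u v x))"
    using F vu unfolding frame_sheaf_def by blast
  show ?thesis unfolding ladj_def
  proof (rule theI[where a="l y"])
    show "l y \<in> sec F u \<and> (\<forall>x'\<in>sec F u. le F u (l y) x' = le F v y (res F u v x'))" using l y by blast
  next
    fix x assume x: "x \<in> sec F u \<and> (\<forall>x'\<in>sec F u. le F u x x' = le F v y (res F u v x'))"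
    have ly: "l y \<in> sec F u" using l y by blast
    have r: "le F u x x" "le F u (l y) (l y)" using po[OF P] x ly unfolding partial_order_on_set_def by blast+
    have "le F u x (l y)" using x ly l y r by blast
    moreover have "le F u (l y) x" using x ly l y r by blast
    ultimately show "x = l y" using po[OF P, of u] x ly unfolding partial_order_on_set_def by blast
  qed
qed

lemma ladj_same:
  assumes F: "frame_sheaf F" and y: "y \<in> sec F u"
  shows "ladj F u u y = y"
proof -
  have P: "is_posheaf F" using F unfolding frame_sheaf_def by blast
  note L = ladj_prop[OF F order_refl y]
  have "le F u y y" using po[OF P] y unfolding partial_order_on_set_def by blast
  then have "le F u (ladj F u u y) y" using L y res_id[OF P y] by simp
  moreover have "le F u (ladj F u u y) (ladj F u u y)" using po[OF P] L unfolding partial_order_on_set_def by blast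
  then have "le F u y (ladj F u u y)" using L res_id[OF P, of "ladj F u u y" u] by auto
  ultimately show ?thesis using po[OF P, of u] L y unfolding partial_order_on_set_def by blast
qed

lemma frame_sheaf_lub:
  assumes F: "frame_sheaf F" and B: "B \<subseteq> sec F u"
  shows "\<exists>z. is_lub (sec F u) (le F u) B z"
proof -
  have "frame_on (sec F u) (le F u)" using F unfolding frame_sheaf_def by (metis (no_types))
  then have "\<forall>B\<subseteq>sec F u. \<exists>z. is_lub (sec F u) (le F u) B z" unfolding frame_on_def by (elim conjE)
  then show ?thesis using B by (elim allE impE) auto
qed

lemma sup_sh_lub:
  assumes F: "frame_sheaf F" and T: "\<forall>w. w \<le> u \<longrightarrow> T w \<subseteq> sec F w"
  shows "sup_sh F u T = lub_on (sec F u) (le F u) {ladj F u v y | v y. v \<le> u \<and> y \<in> T v}"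
proof -
  let ?L = "{ladj F u v y | v y. v \<le> u \<and> y \<in> T v}"
  have P: "is_posheaf F" using F unfolding frame_sheaf_def by blast
  have Lsub: "?L \<subseteq> sec F u"
  proof
    fix b assume "b \<in> ?L"
    then obtain v y where "b = ladj F u v y" "v \<le> u" "y \<in> T v" by blast
    then show "b \<in> sec F u" using ladj_prop[OF F, of v u y] T by blast
  qed
  obtain z where z: "is_lub (sec F u) (le F u) ?L z" using frame_sheaf_lub[OF F Lsub] by blast
  have eqv: "ubs F u T z' \<longleftrightarrow> (\<forall>b\<in>?L. le F u b z')" if z': "z' \<in> sec F u" for z'
  proof
    assume "ubs F u T z'"
    then have A: "\<And>v y. v \<le> u \<Longrightarrow> y \<in> T v \<Longrightarrow> le F v y (res F u v z')" unfolding ubs_def by blast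
    show "\<forall>b\<in>?L. le F u b z'"
    proof
      fix b assume "b \<in> ?L"
      then obtain v y where b: "b = ladj F u v y" "v \<le> u" "y \<in> T v" by blast
      then have "y \<in> sec F v" using T by blast
      then show "le F u b z'" using ladj_prop[OF F b(2)] A[OF b(2,3)] b(1) z' by blast
    qed
  next
    assume A: "\<forall>b\<in>?L. le F u b z'"
    show "ubs F u T z'" unfolding ubs_def
    proof (intro allI impI ballI)
      fix v y assume vy: "v \<le> u" "y \<in> T v"
      then have "y \<in> sec F v" using T by blast
      moreover have "le F u (ladj F u v y) z'" using A vy by blast
      ultimately show "le F v y (res F u v z')" using ladj_prop[OF F vy(1)] z' by blast
    qed
  qed
  have "sup_sh F u T = z"
  proof (rule sup_sh_eq[OF po[OF P]])
    show "z \<in> sec F u" using z unfolding is_lub_def by blast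
    then show "ubs F u T z" using eqv z unfolding is_lub_def by blast
    show "\<forall>z'\<in>sec F u. ubs F u T z' \<longrightarrow> le F u z z'" using eqv z unfolding is_lub_def by blast
  qed
  moreover have "lub_on (sec F u) (le F u) ?L = z" using lub_eq[OF po[OF P] z] .
  ultimately show ?thesis by simp
qed

lemma lub_single:
  assumes po: "partial_order_on_set A r" and a: "a \<in> A"
  shows "lub_on A r {a} = a"
  apply (rule lub_eq[OF po])
  using po a unfolding is_lub_def partial_order_on_set_def by blast

lemma sup_push_eq:
  assumes G: "is_posheaf G" and m: "sheaf_morphism F G \<alpha>" and S: "\<forall>w. w \<le> u \<longrightarrow> S w \<subseteq> sec F w"
  shows "sup_sh G u (push \<alpha> G u S) = sup_sh G u (\<lambda>v. \<alpha> v ` S v)"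
proof (rule sup_sh_cong)
  have "\<forall>w. w \<le> u \<longrightarrow> \<alpha> w ` S w \<subseteq> sec G w" using m S unfolding sheaf_morphism_def by blast
  then show "\<And>z. z \<in> sec G u \<Longrightarrow> ubs G u (push \<alpha> G u S) z = ubs G u (\<lambda>v. \<alpha> v ` S v) z"
    using ubs_push[OF G] by blast
qed

lemma subsheaf_sec: "subsheaf F u S \<Longrightarrow> \<forall>w. w \<le> u \<longrightarrow> S w \<subseteq> sec F w"
  unfolding subsheaf_def by (elim conjE)

lemma gen_lemma:
  assumes F: "frame_sheaf F" and G: "frame_sheaf G" and m: "sheaf_morphism F G \<alpha>"
    and SP: "sup_preserving F G \<alpha>" and T: "\<forall>w. w \<le> u \<longrightarrow> T w \<subseteq> sec F w"
  shows "sup_sh G u (\<lambda>v. \<alpha> v ` T v) = \<alpha> u (sup_sh F u T)"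
proof -
  have PF: "is_posheaf F" using F unfolding frame_sheaf_def by blast
  have PG: "is_posheaf G" using G unfolding frame_sheaf_def by blast
  define S where "S = push (\<lambda>w x. x) F u T"
  have T': "\<forall>w. w \<le> u \<longrightarrow> (\<lambda>x. x) ` T w \<subseteq> sec F w" using T by simp
  have sub: "subsheaf F u S" unfolding S_def by (rule push_subsheaf[OF PF T'])
  have Ssec: "\<forall>w. w \<le> u \<longrightarrow> S w \<subseteq> sec F w" using subsheaf_sec[OF sub] .
  have 1: "sup_sh G u (push \<alpha> G u S) = \<alpha> u (sup_sh F u S)" using SP sub unfolding sup_preserving_def by (elim allE impE)
  have 2: "sup_sh G u (push \<alpha> G u S) = sup_sh G u (\<lambda>v. \<alpha> v ` S v)" by (rule sup_push_eq[OF PG m Ssec])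
  have 3: "sup_sh G u (\<lambda>v. \<alpha> v ` S v) = sup_sh G u (\<lambda>v. \<alpha> v ` T v)"
    unfolding S_def by (rule sup_sh_cong, rule ubs_gen[OF PF PG m T])
  have 4: "sup_sh F u S = sup_sh F u T"
  proof (rule sup_sh_cong)
    fix z assume "z \<in> sec F u"
    from ubs_push[OF PF T' this] show "ubs F u S z = ubs F u T z" unfolding S_def image_ident .
  qed
  show ?thesis using 1 2 3 4 by metis
qed

theorem lemma3p3:
  fixes F :: "('o::complete_lattice, 'a) posheaf"
    and G :: "('o, 'b) posheaf"
    and \<alpha> :: "'o \<Rightarrow> 'a \<Rightarrow> 'b"
  assumes "frame_type TYPE('o)"
    and F: "frame_sheaf F" and G: "frame_sheaf G"
    and m: "sheaf_morphism F G \<alpha>" and "order_preserving F G \<alpha>"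
  shows "frame_morphism F G \<alpha> \<longleftrightarrow>
    ((\<forall>u. frame_hom (sec F u) (le F u) (sec G u) (le G u) (\<alpha> u)) \<and>
     (\<forall>u v. v \<le> u \<longrightarrow> (\<forall>y\<in>sec F v. \<alpha> u (ladj F u v y) = ladj G u v (\<alpha> v y))))"
proof -
  have PF: "is_posheaf F" using F unfolding frame_sheaf_def by blast
  have PG: "is_posheaf G" using G unfolding frame_sheaf_def by blast
  have asec: "\<And>w x. x \<in> sec F w \<Longrightarrow> \<alpha> w x \<in> sec G w" using m unfolding sheaf_morphism_def by blast
  show ?thesis
  proof
    assume FM: "frame_morphism F G \<alpha>"
    have SPMT: "sup_preserving F G \<alpha> \<and> preserves_finite_meets F G \<alpha>"
      using FM unfolding frame_morphism_def .
    note SP = conjunct1[OF SPMT] and MT = conjunct2[OF SPMT]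
    have FH: "frame_hom (sec F u) (le F u) (sec G u) (le G u) (\<alpha> u)" for u
      unfolding frame_hom_def
    proof (intro conjI ballI allI impI)
      show "\<And>x. x \<in> sec F u \<Longrightarrow> \<alpha> u x \<in> sec G u" by (rule asec)
    next
      fix C assume C: "C \<subseteq> sec F u"
      define T where "T = (\<lambda>w. if w = u then C else {})"
      have T: "\<forall>w. w \<le> u \<longrightarrow> T w \<subseteq> sec F w" using C by (simp add: T_def)
      have TG: "\<forall>w. w \<le> u \<longrightarrow> (\<lambda>v. \<alpha> v ` T v) w \<subseteq> sec G w" using C asec by (auto simp: T_def)
      have e1: "{ladj F u v y | v y. v \<le> u \<and> y \<in> T v} = C"
      proof (intro equalityI subsetI)
        fix b assume "b \<in> {ladj F u v y | v y. v \<le> u \<and> y \<in> T v}"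
        then obtain v y where b: "b = ladj F u v y" "y \<in> T v" by blast
        then have "v = u" "y \<in> C" unfolding T_def by (auto split: if_splits)
        then show "b \<in> C" using b ladj_same[OF F, of y u] C by auto
      next
        fix b assume b: "b \<in> C"
        then have "b = ladj F u u b" using ladj_same[OF F, of b u] C by auto
        moreover have "b \<in> T u" using b unfolding T_def by simp
        ultimately show "b \<in> {ladj F u v y | v y. v \<le> u \<and> y \<in> T v}" by blast
      qed
      have e2: "{ladj G u v y | v y. v \<le> u \<and> y \<in> \<alpha> v ` T v} = \<alpha> u ` C"
      proof (intro equalityI subsetI)
        fix b assume "b \<in> {ladj G u v y | v y. v \<le> u \<and> y \<in> \<alpha> v ` T v}"
        then obtain v y where b: "b = ladj G u v (\<alpha> v y)" "y \<in> T v" by blast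
        then have "v = u" "y \<in> C" unfolding T_def by (auto split: if_splits)
        then show "b \<in> \<alpha> u ` C" using b ladj_same[OF G, of "\<alpha> u y" u] asec[of y u] C by auto
      next
        fix b assume "b \<in> \<alpha> u ` C"
        then obtain c where c: "c \<in> C" "b = \<alpha> u c" by blast
        then have "b = ladj G u u (\<alpha> u c)" using ladj_same[OF G, of "\<alpha> u c" u] asec[of c u] C by auto
        moreover have "c \<in> T u" using c unfolding T_def by simp
        ultimately show "b \<in> {ladj G u v y | v y. v \<le> u \<and> y \<in> \<alpha> v ` T v}" by blast
      qed
      have "sup_sh G u (\<lambda>v. \<alpha> v ` T v) = \<alpha> u (sup_sh F u T)" by (rule gen_lemma[OF F G m SP T])
      moreover have "sup_sh F u T = lub_on (sec F u) (le F u) C" using sup_sh_lub[OF F T] e1 by simp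
      moreover have "sup_sh G u (\<lambda>v. \<alpha> v ` T v) = lub_on (sec G u) (le G u) (\<alpha> u ` C)"
        using sup_sh_lub[OF G TG] e2 by simp
      ultimately show "\<alpha> u (lub_on (sec F u) (le F u) C) = lub_on (sec G u) (le G u) (\<alpha> u ` C)"
        by simp
    next
      show "\<And>x y. x \<in> sec F u \<Longrightarrow> y \<in> sec F u \<Longrightarrow> \<alpha> u (meet_on (sec F u) (le F u) x y) = meet_on (sec G u) (le G u) (\<alpha> u x) (\<alpha> u y)"
        using MT unfolding preserves_finite_meets_def by blast
      show "\<alpha> u (top_on (sec F u) (le F u)) = top_on (sec G u) (le G u)"
        using MT unfolding preserves_finite_meets_def by blast
    qed
    have CM: "\<alpha> u (ladj F u v y) = ladj G u v (\<alpha> v y)" if vu: "v \<le> u" and y: "y \<in> sec F v" for u v y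
    proof -
      define T where "T = (\<lambda>w. if w = v then {y} else {})"
      have T: "\<forall>w. w \<le> u \<longrightarrow> T w \<subseteq> sec F w" using y by (simp add: T_def)
      have TG: "\<forall>w. w \<le> u \<longrightarrow> (\<lambda>v. \<alpha> v ` T v) w \<subseteq> sec G w" using y asec by (auto simp: T_def)
      have e1: "{ladj F u v' y' | v' y'. v' \<le> u \<and> y' \<in> T v'} = {ladj F u v y}"
        using vu by (auto simp: T_def)
      have e2: "{ladj G u v' y' | v' y'. v' \<le> u \<and> y' \<in> \<alpha> v' ` T v'} = {ladj G u v (\<alpha> v y)}"
        using vu by (auto simp: T_def)
      have l1: "lub_on (sec F u) (le F u) {ladj F u v y} = ladj F u v y"
        using lub_single[OF po[OF PF]] ladj_prop[OF F vu y] by blast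
      have l2: "lub_on (sec G u) (le G u) {ladj G u v (\<alpha> v y)} = ladj G u v (\<alpha> v y)"
        using lub_single[OF po[OF PG]] ladj_prop[OF G vu asec[OF y]] by blast
      have "sup_sh G u (\<lambda>v. \<alpha> v ` T v) = \<alpha> u (sup_sh F u T)" by (rule gen_lemma[OF F G m SP T])
      then show ?thesis using sup_sh_lub[OF F T] sup_sh_lub[OF G TG] e1 e2 l1 l2 by simp
    qed
    show "(\<forall>u. frame_hom (sec F u) (le F u) (sec G u) (le G u) (\<alpha> u)) \<and>
     (\<forall>u v. v \<le> u \<longrightarrow> (\<forall>y\<in>sec F v. \<alpha> u (ladj F u v y) = ladj G u v (\<alpha> v y)))"
      using FH CM by blast
  next
    assume A: "(\<forall>u. frame_hom (sec F u) (le F u) (sec G u) (le G u) (\<alpha> u)) \<and>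
     (\<forall>u v. v \<le> u \<longrightarrow> (\<forall>y\<in>sec F v. \<alpha> u (ladj F u v y) = ladj G u v (\<alpha> v y)))"
    have FH: "\<And>u. frame_hom (sec F u) (le F u) (sec G u) (le G u) (\<alpha> u)" using A by blast
    have CM: "\<And>u v y. v \<le> u \<Longrightarrow> y \<in> sec F v \<Longrightarrow> \<alpha> u (ladj F u v y) = ladj G u v (\<alpha> v y)" using A by blast
    have SP: "sup_preserving F G \<alpha>" unfolding sup_preserving_def
    proof (intro allI impI)
      fix u S assume sub: "subsheaf F u S"
      have Ssec: "\<forall>w. w \<le> u \<longrightarrow> S w \<subseteq> sec F w" using subsheaf_sec[OF sub] .
      have TG: "\<forall>w. w \<le> u \<longrightarrow> (\<lambda>v. \<alpha> v ` S v) w \<subseteq> sec G w" using Ssec asec by auto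
      let ?L = "{ladj F u v y | v y. v \<le> u \<and> y \<in> S v}"
      have Lsub: "?L \<subseteq> sec F u"
      proof
        fix b assume "b \<in> ?L"
        then obtain v y where "b = ladj F u v y" "v \<le> u" "y \<in> S v" by blast
        then show "b \<in> sec F u" using ladj_prop[OF F, of v u y] Ssec by blast
      qed
      have e: "{ladj G u v y | v y. v \<le> u \<and> y \<in> \<alpha> v ` S v} = \<alpha> u ` ?L"
      proof (intro equalityI subsetI)
        fix b assume "b \<in> {ladj G u v y | v y. v \<le> u \<and> y \<in> \<alpha> v ` S v}"
        then obtain v y where b: "b = ladj G u v (\<alpha> v y)" "v \<le> u" "y \<in> S v" by blast
        have "y \<in> sec F v" using Ssec b(2,3) by blast
        then have "b = \<alpha> u (ladj F u v y)" using CM[OF b(2)] b(1) by simp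
        then show "b \<in> \<alpha> u ` ?L" using b by blast
      next
        fix b assume "b \<in> \<alpha> u ` ?L"
        then obtain v y where b: "b = \<alpha> u (ladj F u v y)" "v \<le> u" "y \<in> S v" by blast
        have "y \<in> sec F v" using Ssec b(2,3) by blast
        then have "b = ladj G u v (\<alpha> v y)" using CM[OF b(2)] b(1) by simp
        then show "b \<in> {ladj G u v y | v y. v \<le> u \<and> y \<in> \<alpha> v ` S v}" using b by blast
      qed
      have "\<forall>C\<subseteq>sec F u. \<alpha> u (lub_on (sec F u) (le F u) C) = lub_on (sec G u) (le G u) (\<alpha> u ` C)"
        using FH[of u] unfolding frame_hom_def by (elim conjE)
      then have j: "\<alpha> u (lub_on (sec F u) (le F u) ?L) = lub_on (sec G u) (le G u) (\<alpha> u ` ?L)"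
        using Lsub by blast
      have "sup_sh G u (push \<alpha> G u S) = sup_sh G u (\<lambda>v. \<alpha> v ` S v)" by (rule sup_push_eq[OF PG m Ssec])
      also have "\<dots> = lub_on (sec G u) (le G u) {ladj G u v y | v y. v \<le> u \<and> y \<in> \<alpha> v ` S v}"
        by (rule sup_sh_lub[OF G TG])
      also have "\<dots> = lub_on (sec G u) (le G u) (\<alpha> u ` ?L)" by (simp only: e)
      also have "\<dots> = \<alpha> u (lub_on (sec F u) (le F u) ?L)" by (rule j[symmetric])
      also have "\<dots> = \<alpha> u (sup_sh F u S)" by (simp only: sup_sh_lub[OF F Ssec])
      finally show "sup_sh G u (push \<alpha> G u S) = \<alpha> u (sup_sh F u S)" .
    qed
    have MT: "preserves_finite_meets F G \<alpha>"
      unfolding preserves_finite_meets_def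
    proof (intro conjI allI ballI)
      fix u x y assume "x \<in> sec F u" "y \<in> sec F u"
      moreover have "\<forall>x\<in>sec F u. \<forall>y\<in>sec F u. \<alpha> u (meet_on (sec F u) (le F u) x y) = meet_on (sec G u) (le G u) (\<alpha> u x) (\<alpha> u y)"
        using FH[of u] unfolding frame_hom_def by (elim conjE)
      ultimately show "\<alpha> u (meet_on (sec F u) (le F u) x y) = meet_on (sec G u) (le G u) (\<alpha> u x) (\<alpha> u y)" by blast
    next
      fix u show "\<alpha> u (top_on (sec F u) (le F u)) = top_on (sec G u) (le G u)"
        using FH[of u] unfolding frame_hom_def by (elim conjE)
    qed
    show "frame_morphism F G \<alpha>" unfolding frame_morphism_def using SP MT by blast
  qed
qed

end
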